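(* Let $p,q$ be distinct primes and $N=p+q$. Let $M=(m_{ik})_{i,k\in\mathbb Z/N\mathbb Z}$ be an $N\times N$ matrix with entries in $\mathbb Z/pq\mathbb Z$ such that $(e^{2\pi i\,m_{ik}/pq})$ is a complex Hadamard matrix. For $i\in\mathbb Z/N\mathbb Z$ let $L_i(k)=m_{ik}$ and for $i,j$ let $L_{ij}=L_j-L_i:\mathbb Z/N\mathbb Z\to\mathbb Z/pq\mathbb Z$. Then for all distinct $i,j\in\mathbb Z/N\mathbb Z$ there exist a partition $\mathbb Z/N\mathbb Z=P_{ij}\sqcup Q_{ij}\sqcup R_{ij}$ and $r\in\mathbb Z/pq\mathbb Z$ such that: (i) $\#R_{ij}=2$ and $L_{ij}(k)=r$ for all $k\in R_{ij}$; (ii) $\#P_{ij}=p-1$ and $\{L_{ij}(k):k\in P_{ij}\}=(r+q(\mathbb Z/pq\mathbb Z))\setminus\{r\}$; (iii) $\#Q_{ij}=q-1$ and $\{L_{ij}(k):k\in Q_{ij}\}=(r+p(\mathbb Z/pq\mathbb Z))\setminus\{r\}$.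
   Context: A complex Hadamard matrix has all entries of modulus one and pairwise orthogonal rows. For $d\mid pq$, $d(\mathbb Z/pq\mathbb Z)$ denotes the subgroup of multiples of $d$ in $\mathbb Z/pq\mathbb Z$ (so $q(\mathbb Z/pq\mathbb Z)$ has $p$ elements and $p(\mathbb Z/pq\mathbb Z)$ has $q$ elements). *)

theory Defs
  imports "HOL-Analysis.Analysis"
begin

text \<open>Matrices indexed by {..<N} x {..<N} (i.e. Z/NZ via representatives), with
entries in Z/nZ represented by integers in {0..<n}.\<close>

definition zmod_matrix :: "nat \<Rightarrow> nat \<Rightarrow> (nat \<Rightarrow> nat \<Rightarrow> int) \<Rightarrow> bool" where
  "zmod_matrix N n m \<longleftrightarrow> (\<forall>i<N. \<forall>k<N. m i k \<in> {0..<int n})"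

definition exp_matrix :: "nat \<Rightarrow> (nat \<Rightarrow> nat \<Rightarrow> int) \<Rightarrow> nat \<Rightarrow> nat \<Rightarrow> complex" where
  "exp_matrix n m i k = exp (2 * of_real pi * \<i> * of_int (m i k) / of_nat n)"

definition complex_hadamard :: "nat \<Rightarrow> (nat \<Rightarrow> nat \<Rightarrow> complex) \<Rightarrow> bool" where
  "complex_hadamard N H \<longleftrightarrow>
     (\<forall>i<N. \<forall>k<N. norm (H i k) = 1) \<and>
     (\<forall>i<N. \<forall>j<N. i \<noteq> j \<longrightarrow> (\<Sum>k<N. H i k * cnj (H j k)) = 0)"

definition Ldiff :: "nat \<Rightarrow> (nat \<Rightarrow> nat \<Rightarrow> int) \<Rightarrow> nat \<Rightarrow> nat \<Rightarrow> nat \<Rightarrow> int" where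
  "Ldiff n m i j k = (m j k - m i k) mod int n"

definition coset_mult :: "nat \<Rightarrow> nat \<Rightarrow> int \<Rightarrow> int set" where
  "coset_mult n d r = {(r + int d * t) mod int n | t. t \<in> (UNIV :: int set)}"

end

theory Submission
  imports Defs "Jordan_Normal_Form.Char_Poly" "HOL-Number_Theory.Number_Theory"
begin


definition Zr :: "complex \<Rightarrow> complex set" where
  "Zr z = {poly (of_int_poly G) z | G. True}"

lemma Zr_of_int [simp, intro]: "of_int c \<in> Zr z"
  unfolding Zr_def by (auto intro!: exI[of _ "[:c:]"] simp: hom_distribs)

lemma Zr_self [simp, intro]: "z \<in> Zr z"
  unfolding Zr_def by (auto intro!: exI[of _ "[:0,1:]"])

lemma Zr_add [intro]: "x \<in> Zr z \<Longrightarrow> y \<in> Zr z \<Longrightarrow> x + y \<in> Zr z"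
  unfolding Zr_def proof (clarify)
  fix G H show "\<exists>K. poly (of_int_poly G) z + poly (of_int_poly H) z = poly (of_int_poly K) z \<and> True"
    by (rule exI[of _ "G + H"]) (simp add: hom_distribs)
qed

lemma Zr_diff [intro]: "x \<in> Zr z \<Longrightarrow> y \<in> Zr z \<Longrightarrow> x - y \<in> Zr z"
  unfolding Zr_def proof (clarify)
  fix G H show "\<exists>K. poly (of_int_poly G) z - poly (of_int_poly H) z = poly (of_int_poly K) z \<and> True"
    by (rule exI[of _ "G - H"]) (simp add: hom_distribs)
qed

lemma Zr_mult [intro]: "x \<in> Zr z \<Longrightarrow> y \<in> Zr z \<Longrightarrow> x * y \<in> Zr z"
  unfolding Zr_def proof (clarify)
  fix G H show "\<exists>K. poly (of_int_poly G) z * poly (of_int_poly H) z = poly (of_int_poly K) z \<and> True"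
    by (rule exI[of _ "G * H"]) (simp add: hom_distribs)
qed

lemma Zr_of_nat [simp, intro]: "of_nat c \<in> Zr z"
  using Zr_of_int[of "int c" z] by simp

lemma Zr_1 [simp, intro]: "1 \<in> Zr z" using Zr_of_int[of 1 z] by simp
lemma Zr_0 [simp, intro]: "0 \<in> Zr z" using Zr_of_int[of 0 z] by simp

lemma Zr_power [intro]: "x \<in> Zr z \<Longrightarrow> x ^ k \<in> Zr z"
  by (induct k) auto

lemma Zr_sum [intro]: "(\<And>i. i \<in> A \<Longrightarrow> f i \<in> Zr z) \<Longrightarrow> sum f A \<in> Zr z"
  by (induct A rule: infinite_finite_induct) auto

lemma Zr_poly [intro]: "x \<in> Zr z \<Longrightarrow> poly (of_int_poly G) x \<in> Zr z"
  by (induct G) (auto simp: hom_distribs)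

lemma Zr_rat_int:
  assumes zn: "z ^ n = 1" and n: "n > 0" and x: "x \<in> Zr z" and xq: "x \<in> \<rat>"
  shows "x \<in> \<int>"
proof -
  from x obtain G where xG: "x = poly (of_int_poly G) z" unfolding Zr_def by auto
  define d where "d = degree G"
  define C :: "int mat" where "C = mat n n (\<lambda>(b,a). \<Sum>j\<in>{j. j \<le> d \<and> (j + b) mod n = a}. poly.coeff G j)"
  define v :: "complex vec" where "v = vec n (\<lambda>b. z ^ b)"
  have zmod: "z ^ (k mod n) = z ^ k" for k
  proof -
    have "z ^ k = z ^ (k div n * n + k mod n)" by simp
    also have "\<dots> = (z ^ n) ^ (k div n) * z ^ (k mod n)"
      by (simp only: power_add power_mult mult.commute)
    finally show ?thesis using zn by simp
  qed
  have Cc: "C \<in> carrier_mat n n" unfolding C_def by simp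
  have "map_mat of_int C *\<^sub>v v = x \<cdot>\<^sub>v v"
  proof (rule eq_vecI)
    fix b assume b: "b < dim_vec (x \<cdot>\<^sub>v v)"
    hence b: "b < n" by (simp add: v_def)
    have "(map_mat of_int C *\<^sub>v v) $ b = (\<Sum>a<n. of_int (C $$ (b,a)) * z ^ a)"
      using b by (simp add: v_def C_def mult_mat_vec_def scalar_prod_def lessThan_atLeast0)
    also have "\<dots> = (\<Sum>a<n. \<Sum>j\<in>{j\<in>{..d}. (j + b) mod n = a}. of_int (poly.coeff G j) * z ^ ((j + b) mod n))"
      using b by (auto simp: C_def sum_distrib_right intro!: sum.cong)
    also have "\<dots> = (\<Sum>j\<in>{..d}. of_int (poly.coeff G j) * z ^ ((j + b) mod n))"
      by (rule sum.group) (auto simp: n)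
    also have "\<dots> = (\<Sum>j\<in>{..d}. of_int (poly.coeff G j) * z ^ j) * z ^ b"
      by (simp add: zmod sum_distrib_right power_add mult.assoc)
    also have "(\<Sum>j\<in>{..d}. of_int (poly.coeff G j) * z ^ j) = x"
      unfolding xG poly_altdef d_def by simp
    finally show "(map_mat of_int C *\<^sub>v v) $ b = (x \<cdot>\<^sub>v v) $ b"
      using b by (simp add: v_def)
  qed (simp add: v_def C_def)
  moreover have "v \<noteq> 0\<^sub>v n"
  proof
    assume "v = 0\<^sub>v n"
    hence "v $ 0 = 0\<^sub>v n $ 0" by simp
    thus False using n by (simp add: v_def)
  qed
  ultimately have "eigenvalue (map_mat of_int C) x"
    unfolding eigenvalue_def eigenvector_def using Cc
    by (intro exI[of _ v]) (auto simp: v_def)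
  hence "poly (char_poly (map_mat of_int C)) x = 0"
    using eigenvalue_root_char_poly[of "map_mat of_int C" n x] Cc by simp
  hence "poly (of_int_poly (char_poly C)) x = 0"
    using of_int_hom.char_poly_hom[OF Cc] by metis
  moreover have "monic (char_poly C)" using degree_monic_char_poly[OF Cc] by simp
  ultimately have "algebraic_int x" using algebraic_int_altdef_ipoly by blast
  thus ?thesis using rational_algebraic_int_is_int xq by blast
qed



definition mR :: "nat \<Rightarrow> complex \<Rightarrow> complex \<Rightarrow> bool" where
  "mR l z a \<longleftrightarrow> (\<exists>r\<in>Zr z. a = of_nat l * r)"

lemma mR_0 [simp]: "mR l z 0" unfolding mR_def by (auto intro!: bexI[of _ 0])
lemma mR_add: "mR l z a \<Longrightarrow> mR l z b \<Longrightarrow> mR l z (a + b)"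
  unfolding mR_def by (auto intro!: bexI[of _ "_ + _"] simp: distrib_left)
lemma mR_diff: "mR l z a \<Longrightarrow> mR l z b \<Longrightarrow> mR l z (a - b)"
  unfolding mR_def by (auto intro!: bexI[of _ "_ - _"] simp: right_diff_distrib)
lemma mR_mult: "mR l z a \<Longrightarrow> b \<in> Zr z \<Longrightarrow> mR l z (b * a)"
  unfolding mR_def by (auto intro!: bexI[of _ "b * _"] simp: mult.left_commute)

lemma binom_frob:
  assumes l: "prime l" and a: "a \<in> Zr z" and b: "b \<in> Zr z"
  shows "mR l z ((a + b) ^ l - a ^ l - b ^ l)"
proof -
  define co where "co k = (if k = 0 \<or> k = l then 0 else (l choose k) div l)" for k
  define r where "r = (\<Sum>k\<le>l. of_nat (co k) * a ^ k * b ^ (l - k))"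
  have l0: "l \<noteq> 0" using l by auto
  have trm: "of_nat (l choose k) * a ^ k * b ^ (l - k) =
      (if k = l then a ^ l else 0) + (if k = 0 then b ^ l else 0) + of_nat l * (of_nat (co k) * a ^ k * b ^ (l - k))"
    if "k \<le> l" for k
  proof (cases "k = 0 \<or> k = l")
    case True thus ?thesis using l0 by (auto simp: co_def)
  next
    case False
    hence "l dvd (l choose k)" using dvd_choose_prime[of k l] l that by auto
    hence "of_nat (l choose k) = (of_nat l * of_nat (co k) :: complex)"
      using False by (simp add: co_def flip: of_nat_mult)
    thus ?thesis using False by simp
  qed
  have "(a + b) ^ l = (\<Sum>k\<le>l. (if k = l then a ^ l else 0) + (if k = 0 then b ^ l else 0) + of_nat l * (of_nat (co k) * a ^ k * b ^ (l - k)))"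
    unfolding binomial_ring by (rule sum.cong) (auto simp: trm)
  also have "\<dots> = a ^ l + b ^ l + of_nat l * r"
    by (simp add: sum.distrib r_def sum_distrib_left)
  finally have "(a + b) ^ l - a ^ l - b ^ l = of_nat l * r" by simp
  moreover have "r \<in> Zr z" unfolding r_def using a b by (intro Zr_sum Zr_mult Zr_power) auto
  ultimately show ?thesis unfolding mR_def by blast
qed

lemma int_frob:
  assumes l: "prime l"
  shows "mR l z ((of_int c) ^ l - of_int c)"
proof (induct c rule: int_induct[where k = 0])
  case base thus ?case using l by (simp add: zero_power prime_gt_0_nat)
next
  case (step1 i)
  have "mR l z ((of_int i + 1) ^ l - of_int i ^ l - 1 ^ l)" by (rule binom_frob[OF l]) auto
  from mR_add[OF this step1(2)] show ?case by (simp add: algebra_simps)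
next
  case (step2 i)
  have "mR l z ((of_int (i - 1) + 1) ^ l - of_int (i - 1) ^ l - 1 ^ l)" by (rule binom_frob[OF l]) auto
  from mR_diff[OF step2(2) this] show ?case by (simp add: algebra_simps)
qed

lemma poly_frob:
  assumes l: "prime l" and x: "x \<in> Zr z"
  shows "mR l z (poly (of_int_poly G) (x ^ l) - (poly (of_int_poly G) x) ^ l)"
proof (induct G)
  case 0 thus ?case using l by (simp add: zero_power prime_gt_0_nat)
next
  case (pCons c G)
  let ?g = "poly (of_int_poly G)"
  have e: "poly (of_int_poly (pCons c G)) y = of_int c + y * ?g y" for y :: complex
    by (simp add: hom_distribs)
  have A: "mR l z ((of_int c + x * ?g x) ^ l - of_int c ^ l - (x * ?g x) ^ l)"
    by (rule binom_frob[OF l]) (use x in auto)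
  have B: "mR l z (of_int c ^ l - of_int c)" by (rule int_frob[OF l])
  have C: "mR l z (x ^ l * (?g (x ^ l) - ?g x ^ l))"
    by (rule mR_mult[OF pCons(2)]) (use x in auto)
  have eq: "poly (of_int_poly (pCons c G)) (x ^ l) - (poly (of_int_poly (pCons c G)) x) ^ l =
     x ^ l * (?g (x ^ l) - ?g x ^ l) - ((of_int c + x * ?g x) ^ l - of_int c ^ l - (x * ?g x) ^ l) - (of_int c ^ l - of_int c)"
    unfolding e by (simp add: algebra_simps power_mult_distrib)
  show ?case unfolding eq by (rule mR_diff[OF mR_diff[OF C A] B])
qed



lemma landau:
  fixes z :: complex
  assumes zn: "z ^ n = 1" and n: "n > 0" and l: "prime l" and nl: "\<not> l dvd n"
    and F0: "poly (of_int_poly F) z = 0"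
  shows "poly (of_int_poly F) (z ^ l) = 0"
proof -
  define ev where "ev g = poly (of_int_poly g) z" for g :: "int poly"
  define P :: "int poly" where "P = Polynomial.monom 1 n - 1"
  have evP: "ev P = 0" using zn by (simp add: ev_def P_def hom_distribs poly_monom)
  have P0: "P \<noteq> 0"
  proof
    assume "P = 0"
    hence "poly.coeff P n = 0" by simp
    thus False using n by (simp add: P_def)
  qed
  obtain g0 where g0: "g0 \<noteq> 0 \<and> ev g0 = 0" and g0min: "\<And>g. g \<noteq> 0 \<and> ev g = 0 \<Longrightarrow> degree g0 \<le> degree g"
    using ex_has_least_nat[of "\<lambda>g. g \<noteq> 0 \<and> ev g = 0" P degree] P0 evP by blast
  define f where "f = primitive_part g0"
  have cg0: "Polynomial.content g0 \<noteq> 0" using g0 by simp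
  have "ev g0 = of_int (Polynomial.content g0) * ev f"
    unfolding ev_def f_def
    by (subst content_times_primitive_part[symmetric, of g0]) (simp add: hom_distribs del: content_times_primitive_part)
  hence evf: "ev f = 0" using g0 cg0 by simp
  have f0: "f \<noteq> 0" using g0 by (simp add: f_def)
  have degf: "degree f = degree g0" by (simp add: f_def)
  have cf: "Polynomial.content f = 1" using g0 by (simp add: f_def)
  have divi: "\<exists>k q. Polynomial.smult (lead_coeff f ^ k) g = f * q" if "ev g = 0" for g
  proof -
    obtain q r where qr: "pseudo_divmod g f = (q, r)" by (cases "pseudo_divmod g f")
    note pd = pseudo_divmod[OF f0 qr]
    have "ev r = 0"
    proof -
      have "ev (Polynomial.smult (lead_coeff f ^ (Suc (degree g) - degree f)) g) = ev (f * q + r)"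
        using pd(1) by simp
      thus ?thesis using that evf by (simp add: ev_def hom_distribs)
    qed
    have "r = 0"
    proof (rule ccontr)
      assume "r \<noteq> 0"
      hence "degree g0 \<le> degree r" using g0min \<open>ev r = 0\<close> by blast
      moreover have "degree r < degree f" using pd(2) \<open>r \<noteq> 0\<close> by simp
      ultimately show False using degf by simp
    qed
    thus ?thesis using pd(1) by auto
  qed
  obtain k q where kq: "Polynomial.smult (lead_coeff f ^ k) P = f * q" using divi[OF evP] by blast
  define c where "c = lead_coeff f ^ k"
  have c0: "c \<noteq> 0" using f0 by (simp add: c_def)
  have cP: "Polynomial.content P = 1"
  proof -
    have "Polynomial.content P dvd poly.coeff P n" by (rule content_dvd_coeff)
    hence "Polynomial.content P dvd 1" using n by (simp add: P_def)
    hence "\<bar>Polynomial.content P\<bar> = 1" by simp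
    moreover have "normalize (Polynomial.content P) = Polynomial.content P" by (rule normalize_content)
    ultimately show ?thesis by (simp add: normalize_int_def)
  qed
  have "Polynomial.content q = Polynomial.content (f * q)" by (simp add: content_mult cf)
  also have "\<dots> = \<bar>c\<bar>" using kq[folded c_def] cP by (metis content_smult mult.right_neutral normalize_int_def)
  finally have cq: "Polynomial.content q = \<bar>c\<bar>" .
  define q' where "q' = primitive_part q"
  have "q = Polynomial.smult \<bar>c\<bar> q'" unfolding q'_def by (metis cq content_times_primitive_part)
  hence hh: "Polynomial.smult \<bar>c\<bar> (Polynomial.smult (sgn c) P) = Polynomial.smult \<bar>c\<bar> (f * q')"
  proof -
    have "Polynomial.smult \<bar>c\<bar> (Polynomial.smult (sgn c) P) = Polynomial.smult c P"
      by (simp only: smult_smult abs_mult_sgn)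
    also have "\<dots> = f * q" by (rule kq[folded c_def])
    also have "\<dots> = Polynomial.smult \<bar>c\<bar> (f * q')" by (simp only: \<open>q = _\<close> mult_smult_right)
    finally show ?thesis .
  qed
  have e1: "Polynomial.smult (sgn c) P = f * q'" using smult_cancel[OF _ hh] c0 by simp
  define g1 where "g1 = Polynomial.smult (sgn c) q'"
  have Pfg: "P = f * g1"
  proof -
    have "f * g1 = Polynomial.smult (sgn c) (Polynomial.smult (sgn c) P)" by (simp add: g1_def e1)
    also have "\<dots> = P" using c0 by (simp add: sgn_if)
    finally show ?thesis by simp
  qed
  have cPn: "poly.coeff P n = 1" using n by (simp add: P_def)
  have "degree P \<le> n" unfolding P_def
    by (rule order.trans[OF degree_diff_le_max]) (simp add: degree_monom_le)
  moreover have "n \<le> degree P" using cPn by (intro le_degree) simp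
  ultimately have "lead_coeff P = 1" using cPn by simp
  hence "lead_coeff f * lead_coeff g1 = 1" using Pfg by (simp add: lead_coeff_mult)
  hence lf: "lead_coeff f = 1 \<or> lead_coeff f = -1" using zmult_eq_1_iff by blast
  define w where "w = z ^ l"
  have lpos: "l > 0" using l prime_gt_0_nat by blast
  have wn: "w ^ n = 1" unfolding w_def using zn by (metis power_mult power_mult_distrib mult.commute power_one)
  have fw: "poly (of_int_poly f) w = 0"
  proof (rule ccontr)
    assume fw0: "poly (of_int_poly f) w \<noteq> 0"
    let ?fc = "of_int_poly f :: complex poly" and ?gc = "of_int_poly g1 :: complex poly"
    have Pc: "of_int_poly P = ?fc * ?gc" using Pfg by (simp add: hom_distribs)
    have "poly (of_int_poly P) w = 0" using wn by (simp add: P_def hom_distribs poly_monom)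
    hence gw: "poly ?gc w = 0" using Pc fw0 by simp
    have "poly (pderiv (of_int_poly P)) w = of_nat n * w ^ (n - 1)"
      by (simp add: P_def hom_distribs pderiv_monom pderiv_diff poly_monom)
    also have "pderiv (of_int_poly P) = ?fc * pderiv ?gc + ?gc * pderiv ?fc" using Pc by (simp add: pderiv_mult)
    finally have nw: "of_nat n * w ^ (n - 1) = poly ?fc w * poly (pderiv ?gc) w" using gw by simp
    have "w ^ (n - 1) * w = 1" using wn n by (metis Suc_diff_1 power_Suc2)
    hence nn: "of_nat n = poly ?fc w * (poly (pderiv ?gc) w * w)"
      using nw by (metis mult.assoc mult.right_neutral)
    have "mR l z (poly ?fc (z ^ l) - (poly ?fc z) ^ l)" by (rule poly_frob[OF l]) simp
    moreover have "poly ?fc z = 0" using evf by (simp add: ev_def)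
    ultimately have "mR l z (poly ?fc w)" using lpos by (simp add: w_def zero_power)
    then obtain r where r: "r \<in> Zr z" "poly ?fc w = of_nat l * r" unfolding mR_def by blast
    have wZ: "w \<in> Zr z" unfolding w_def by auto
    have "poly (pderiv ?gc) w \<in> Zr z"
      using Zr_poly[OF wZ, of "pderiv g1"] by (simp add: of_int_hom.map_poly_pderiv)
    hence xZ: "r * (poly (pderiv ?gc) w * w) \<in> Zr z" using r wZ by auto
    have lc: "(of_nat l :: complex) \<noteq> 0" using lpos by simp
    have xe: "r * (poly (pderiv ?gc) w * w) = of_nat n / of_nat l"
      using nn r(2) lc by (simp add: field_simps)
    have "(of_nat n / of_nat l :: complex) \<in> \<rat>" by simp
    hence "(of_nat n / of_nat l :: complex) \<in> \<int>" using Zr_rat_int[OF zn n] xZ xe by metis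
    then obtain t where t: "(of_nat n / of_nat l :: complex) = of_int t" by (auto elim: Ints_cases)
    hence "(of_nat n :: complex) = of_int (int l * t)" using lc by (simp add: field_simps)
    hence "int n = int l * t" by (metis of_int_eq_iff of_int_of_nat_eq)
    hence "int l dvd int n" by simp
    thus False using nl by simp
  qed
  obtain kF qF where kqF: "Polynomial.smult (lead_coeff f ^ kF) F = f * qF" using divi[OF F0[folded ev_def]] by blast
  have u: "(lead_coeff f ^ kF) \<noteq> 0" using lf by auto
  have "of_int (lead_coeff f ^ kF) * poly (of_int_poly F) w = poly (of_int_poly f) w * poly (of_int_poly qF) w"
    using arg_cong[OF kqF, of "\<lambda>p. poly (of_int_poly p) w"] by (simp add: hom_distribs)
  thus ?thesis using fw u f0 by (simp add: w_def)
qed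



lemma all_coprime:
  fixes z :: complex
  assumes zn: "z ^ n = 1" and n: "n > 0" and F0: "poly (of_int_poly F) z = 0"
  shows "coprime k n \<Longrightarrow> poly (of_int_poly F) (z ^ k) = 0"
proof (induction k rule: less_induct)
  case (less k)
  consider "k = 0" | "k = 1" | "k > 1" by linarith
  thus ?case
  proof cases
    case 1
    hence "n = 1" using less.prems by simp
    hence "z = 1" using zn by simp
    thus ?thesis using F0 1 by simp
  next
    case 2 thus ?thesis using F0 by simp
  next
    case 3
    obtain l where l: "prime l" "l dvd k" using prime_factor_nat[of k] 3 by auto
    then obtain k' where k': "k = l * k'" by auto
    have l2: "l \<ge> 2" using l prime_ge_2_nat by blast
    have kpos: "k' > 0" using k' 3 by (cases k') auto
    have "k' * 1 < k' * l" using l2 kpos by (intro mult_less_mono2) auto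
    hence "k' < k" using k' by (simp add: mult.commute)
    moreover have ck: "coprime k' n" using less.prems k' by simp
    ultimately have IH: "poly (of_int_poly F) (z ^ k') = 0" using less.IH by blast
    have nl: "\<not> l dvd n"
    proof
      assume "l dvd n"
      hence "is_unit l" using coprime_common_divisor[OF less.prems l(2)] by simp
      thus False using l by simp
    qed
    have "(z ^ k') ^ n = 1" using zn by (metis power_mult mult.commute power_one)
    from landau[OF this n l(1) nl IH] show ?thesis
      by (simp add: k' power_mult mult.commute)
  qed
qed

lemma geo_sum:
  fixes x :: complex
  assumes "x ^ m = 1"
  shows "(\<Sum>j<m. x ^ j) = (if x = 1 then of_nat m else 0)"
  using assms by (simp add: sum_gp_strict)

lemma prime_coprime_iff: "prime (p::nat) \<Longrightarrow> coprime k p \<longleftrightarrow> \<not> p dvd k"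
  by (meson coprime_commute not_prime_unit prime_imp_coprime coprime_common_divisor dvd_refl)

lemma ram:
  fixes w :: complex
  assumes p: "prime p" and q: "prime q" and pq: "p \<noteq> q"
    and wprim: "\<And>k. w ^ k = 1 \<longleftrightarrow> p * q dvd k"
  shows "(\<Sum>k\<in>{k. k < p * q \<and> coprime k (p * q)}. w ^ (k * d)) =
    of_nat (p * q) * (if p * q dvd d then 1 else 0) - of_nat q * (if q dvd d then 1 else 0)
      - of_nat p * (if p dvd d then 1 else 0) + 1"
proof -
  define n where "n = p * q"
  define U where "U = {k. k < n \<and> coprime k n}"
  define Bp where "Bp = {k. k < n \<and> p dvd k}"
  define Bq where "Bq = {k. k < n \<and> q dvd k}"
  have cpq: "coprime p q" using p q pq by (simp add: primes_coprime)
  have p2: "p \<ge> 2" and q2: "q \<ge> 2" using p q prime_ge_2_nat by auto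
  have npos: "n > 0" using p2 q2 by (simp add: n_def)
  have U_iff: "coprime k n \<longleftrightarrow> \<not> p dvd k \<and> \<not> q dvd k" for k
    using prime_coprime_iff[OF p] prime_coprime_iff[OF q] by (simp add: n_def)
  have all: "{..<n} = U \<union> (Bp \<union> Bq)" by (auto simp: U_def Bp_def Bq_def U_iff)
  have disj: "U \<inter> (Bp \<union> Bq) = {}" by (auto simp: U_def Bp_def Bq_def U_iff)
  have int0: "Bp \<inter> Bq = {0}"
  proof -
    have "k = 0" if "k < n" "p dvd k" "q dvd k" for k
    proof -
      have "n dvd k" unfolding n_def using that cpq by (simp add: divides_mult)
      thus ?thesis using that(1) by (metis dvd_imp_le not_less neq0_conv)
    qed
    thus ?thesis by (auto simp: Bp_def Bq_def npos)
  qed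
  let ?f = "\<lambda>k. w ^ (k * d)"
  have wn: "w ^ n = 1" using wprim by (simp add: n_def)
  have sall: "(\<Sum>k<n. ?f k) = of_nat n * (if n dvd d then 1 else 0)"
  proof -
    have "(\<Sum>k<n. ?f k) = (\<Sum>k<n. (w ^ d) ^ k)" by (rule sum.cong, simp, metis power_mult mult.commute)
    also have "\<dots> = (if w ^ d = 1 then of_nat n else 0)"
      by (rule geo_sum) (metis power_mult mult.commute power_one wn)
    finally show ?thesis using wprim[of d] by (simp add: n_def)
  qed
  have sBp: "sum ?f Bp = of_nat q * (if q dvd d then 1 else 0)"
  proof -
    have "Bp = (\<lambda>j. p * j) ` {..<q}"
    proof (rule subset_antisym; rule subsetI)
      fix k assume "k \<in> Bp"
      then obtain j where "k = p * j" "k < n" by (auto simp: Bp_def)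
      thus "k \<in> (\<lambda>j. p * j) ` {..<q}" using p2 by (auto simp: n_def)
    next
      fix k assume "k \<in> (\<lambda>j. p * j) ` {..<q}"
      thus "k \<in> Bp" using p2 by (auto simp: Bp_def n_def)
    qed
    hence "sum ?f Bp = (\<Sum>j<q. ?f (p * j))" using p2 by (simp add: sum.reindex inj_on_def)
    also have "\<dots> = (\<Sum>j<q. (w ^ (p * d)) ^ j)" by (rule sum.cong) (simp, simp only: power_mult[symmetric] mult_ac)
    also have "\<dots> = (if w ^ (p * d) = 1 then of_nat q else 0)"
    proof (rule geo_sum)
      have "(w ^ (p * d)) ^ q = (w ^ n) ^ d" by (simp add: n_def flip: power_mult) (simp add: mult_ac)
      thus "(w ^ (p * d)) ^ q = 1" using wn by simp
    qed
    also have "w ^ (p * d) = 1 \<longleftrightarrow> q dvd d" using wprim[of "p * d"] p2 by auto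
    finally show ?thesis by simp
  qed
  have sBq: "sum ?f Bq = of_nat p * (if p dvd d then 1 else 0)"
  proof -
    have "Bq = (\<lambda>j. q * j) ` {..<p}"
    proof (rule subset_antisym; rule subsetI)
      fix k assume "k \<in> Bq"
      then obtain j where "k = q * j" "k < n" by (auto simp: Bq_def)
      thus "k \<in> (\<lambda>j. q * j) ` {..<p}" using q2 by (auto simp: n_def mult.commute)
    next
      fix k assume "k \<in> (\<lambda>j. q * j) ` {..<p}"
      thus "k \<in> Bq" using q2 by (auto simp: Bq_def n_def mult.commute)
    qed
    hence "sum ?f Bq = (\<Sum>j<p. ?f (q * j))" using q2 by (simp add: sum.reindex inj_on_def)
    also have "\<dots> = (\<Sum>j<p. (w ^ (q * d)) ^ j)" by (rule sum.cong) (simp, simp only: power_mult[symmetric] mult_ac)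
    also have "\<dots> = (if w ^ (q * d) = 1 then of_nat p else 0)"
    proof (rule geo_sum)
      have "(w ^ (q * d)) ^ p = (w ^ n) ^ d" by (simp add: n_def flip: power_mult) (simp add: mult_ac)
      thus "(w ^ (q * d)) ^ p = 1" using wn by simp
    qed
    also have "w ^ (q * d) = 1 \<longleftrightarrow> p dvd d" using wprim[of "q * d"] q2 by (auto simp: mult.commute)
    finally show ?thesis by simp
  qed
  have fin: "finite U" "finite Bp" "finite Bq" by (auto simp: U_def Bp_def Bq_def)
  have "(\<Sum>k<n. ?f k) = sum ?f U + sum ?f (Bp \<union> Bq)"
    unfolding all by (rule sum.union_disjoint) (use fin disj in auto)
  also have "sum ?f (Bp \<union> Bq) = sum ?f Bp + sum ?f Bq - sum ?f (Bp \<inter> Bq)"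
    using sum_Un[OF fin(2,3), of ?f] by simp
  finally have "sum ?f U = of_nat n * (if n dvd d then 1 else 0) - of_nat q * (if q dvd d then 1 else 0)
      - of_nat p * (if p dvd d then 1 else 0) + 1"
    using sall sBp sBq int0 by (simp add: algebra_simps)
  thus ?thesis by (simp add: U_def n_def)
qed



lemma sum_if_card: "(\<Sum>k<(N::nat). if P k then (c::complex) else 0) = c * of_nat (card {k. k < N \<and> P k})"
proof -
  have "(\<Sum>k<N. if P k then c else 0) = sum (\<lambda>_. c) {k \<in> {..<N}. P k}"
    by (rule sum.inter_filter[symmetric]) simp
  also have "{k \<in> {..<N}. P k} = {k. k < N \<and> P k}" by auto
  finally show ?thesis by (simp add: mult.commute)
qed

lemma dvd_shift:
  fixes m n L b :: nat
  assumes "m dvd n" "b < n"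
  shows "m dvd L + (n - b) \<longleftrightarrow> L mod m = b mod m"
proof -
  have e: "int (L + (n - b)) = (int L - int b) + int n" using assms(2) by simp
  have "m dvd L + (n - b) \<longleftrightarrow> int m dvd int (L + (n - b))" by (simp only: of_nat_dvd_iff)
  also have "\<dots> \<longleftrightarrow> int m dvd (int L - int b)"
    unfolding e using assms(1) by (simp add: dvd_add_left_iff)
  also have "\<dots> \<longleftrightarrow> int L mod int m = int b mod int m" by (simp add: mod_eq_dvd_iff)
  also have "\<dots> \<longleftrightarrow> L mod m = b mod m" by (simp flip: of_nat_mod)
  finally show ?thesis .
qed

lemma count_identity:
  fixes w :: complex and L :: "nat \<Rightarrow> nat"
  assumes p: "prime p" and q: "prime q" and pq: "p \<noteq> q"
    and wprim: "\<And>k. w ^ k = 1 \<longleftrightarrow> p * q dvd k"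
    and Lb: "\<And>k. k < N \<Longrightarrow> L k < p * q" and van: "(\<Sum>k<N. w ^ L k) = 0" and b: "b < p * q"
  shows "int (p * q) * int (card {k. k < N \<and> L k = b}) + int N =
    int q * int (card {k. k < N \<and> L k mod q = b mod q}) + int p * int (card {k. k < N \<and> L k mod p = b mod p})"
proof -
  define n where "n = p * q"
  define U where "U = {k. k < n \<and> coprime k n}"
  have p2: "p \<ge> 2" and q2: "q \<ge> 2" using p q prime_ge_2_nat by auto
  have npos: "n > 0" using p2 q2 by (simp add: n_def)
  have wn: "w ^ n = 1" using wprim by (simp add: n_def)
  define F :: "int poly" where "F = (\<Sum>k<N. Polynomial.monom 1 (L k))"
  have evF: "poly (of_int_poly F) x = (\<Sum>k<N. x ^ L k)" for x :: complex
    by (simp add: F_def hom_distribs poly_sum poly_monom)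
  have vt: "(\<Sum>k<N. (w ^ t) ^ L k) = 0" if "t \<in> U" for t
  proof -
    have "poly (of_int_poly F) (w ^ t) = 0"
      by (rule all_coprime[OF wn npos]) (use van that in \<open>auto simp: evF U_def\<close>)
    thus ?thesis by (simp add: evF)
  qed
  define R where "R d = (of_nat n * (if n dvd d then 1 else 0) - of_nat q * (if q dvd d then 1 else 0)
      - of_nat p * (if p dvd d then 1 else 0) + 1 :: complex)" for d
  have "0 = (\<Sum>t\<in>U. w ^ (t * (n - b)) * (\<Sum>k<N. (w ^ t) ^ L k))" using vt by simp
  also have "\<dots> = (\<Sum>t\<in>U. \<Sum>k<N. w ^ (t * (L k + (n - b))))"
    by (rule sum.cong, simp, simp add: sum_distrib_left, rule sum.cong, simp,
        simp only: power_mult[symmetric] power_add[symmetric] distrib_left add.commute)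
  also have "\<dots> = (\<Sum>k<N. \<Sum>t\<in>U. w ^ (t * (L k + (n - b))))" by (rule sum.swap)
  also have "\<dots> = (\<Sum>k<N. R (L k + (n - b)))"
    unfolding U_def n_def R_def by (rule sum.cong[OF refl], rule ram[OF p q pq wprim])
  also have "\<dots> = (\<Sum>k<N. (if L k = b then of_nat n else 0) - (if L k mod q = b mod q then of_nat q else 0)
       - (if L k mod p = b mod p then of_nat p else 0) + 1)"
  proof (rule sum.cong)
    fix k assume "k \<in> {..<N}"
    hence Lk: "L k < n" using Lb by (simp add: n_def)
    have b': "b < n" using b by (simp add: n_def)
    have "n dvd L k + (n - b) \<longleftrightarrow> L k = b"
      using dvd_shift[of n n b "L k"] b' Lk by simp
    moreover have "q dvd L k + (n - b) \<longleftrightarrow> L k mod q = b mod q"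
      using dvd_shift[of q n b "L k"] b' by (simp add: n_def)
    moreover have "p dvd L k + (n - b) \<longleftrightarrow> L k mod p = b mod p"
      using dvd_shift[of p n b "L k"] b' by (simp add: n_def)
    ultimately show "R (L k + (n - b)) = (if L k = b then of_nat n else 0) - (if L k mod q = b mod q then of_nat q else 0)
       - (if L k mod p = b mod p then of_nat p else 0) + 1"
      unfolding R_def by simp
  qed simp
  also have "\<dots> = of_nat n * of_nat (card {k. k < N \<and> L k = b}) - of_nat q * of_nat (card {k. k < N \<and> L k mod q = b mod q})
       - of_nat p * of_nat (card {k. k < N \<and> L k mod p = b mod p}) + of_nat N"
    by (simp add: sum.distrib sum_subtractf sum_if_card)
  finally have "of_int (int n * int (card {k. k < N \<and> L k = b}) + int N -
      int q * int (card {k. k < N \<and> L k mod q = b mod q}) - int p * int (card {k. k < N \<and> L k mod p = b mod p})) = (0::complex)"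
    by (simp add: algebra_simps)
  hence "int n * int (card {k. k < N \<and> L k = b}) + int N -
      int q * int (card {k. k < N \<and> L k mod q = b mod q}) - int p * int (card {k. k < N \<and> L k mod p = b mod p}) = 0"
    by (simp only: of_int_eq_0_iff)
  thus ?thesis by (simp add: n_def)
qed



lemma sum_eq_1_nat:
  fixes a :: "'a \<Rightarrow> nat"
  assumes fin: "finite A" and s: "(\<Sum>y\<in>A. a y) = 1"
  shows "\<exists>y0\<in>A. \<forall>y\<in>A. a y = (if y = y0 then 1 else 0)"
proof -
  obtain y0 where y0: "y0 \<in> A" "a y0 \<noteq> 0"
    using s fin by (metis sum.neutral zero_neq_one)
  have "(\<Sum>y\<in>A. a y) = a y0 + (\<Sum>y\<in>A - {y0}. a y)" using fin y0(1) by (rule sum.remove)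
  hence a1: "a y0 = 1" and r0: "(\<Sum>y\<in>A - {y0}. a y) = 0" using s y0(2) by linarith+
  have "\<forall>y\<in>A - {y0}. a y = 0" using r0 fin by simp
  thus ?thesis using a1 y0(1) by (intro bexI[of _ y0]) auto
qed

lemma one_class:
  fixes C :: "nat \<Rightarrow> nat"
  assumes p: "prime p" and q: "prime q" and pq: "p \<noteq> q"
    and sumC: "(\<Sum>y<q. C y) = p + q"
    and dv: "\<And>y. y < q \<Longrightarrow> int p dvd int q * (int (C y) - 1)"
  shows "\<exists>y0<q. \<forall>y<q. C y = (if y = y0 then p + 1 else 1)"
proof -
  have cpq: "coprime (int p) (int q)" using p q pq by (simp add: primes_coprime)
  have p2: "p \<ge> 2" using p prime_ge_2_nat by auto
  have d1: "int p dvd int (C y) - 1" if "y < q" for y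
    using dv[OF that] cpq by (simp add: coprime_dvd_mult_right_iff)
  have C1: "C y \<ge> 1" if "y < q" for y
  proof (rule ccontr)
    assume "\<not> C y \<ge> 1"
    hence "C y = 0" by simp
    hence "int p dvd 1" using d1[OF that] by simp
    thus False using p2 by simp
  qed
  define a where "a y = (C y - 1) div p" for y
  have Ca: "C y = 1 + p * a y" if "y < q" for y
  proof -
    have "int p dvd int (C y - 1)" using d1[OF that] C1[OF that] by (simp add: of_nat_diff)
    hence "p dvd C y - 1" by (simp only: of_nat_dvd_iff)
    thus ?thesis using C1[OF that] by (simp add: a_def)
  qed
  have "(\<Sum>y<q. C y) = (\<Sum>y<q. 1 + p * a y)" by (rule sum.cong) (simp_all add: Ca)
  also have "\<dots> = (\<Sum>y<q. 1) + (\<Sum>y<q. p * a y)" by (rule sum.distrib)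
  also have "\<dots> = q + p * (\<Sum>y<q. a y)" by (simp add: sum_distrib_left)
  finally have "p * (\<Sum>y<q. a y) = p * 1" using sumC by linarith
  hence "(\<Sum>y<q. a y) = 1" using p2 by (subst (asm) mult_left_cancel) auto
  then obtain y0 where y0: "y0 < q" "\<forall>y<q. a y = (if y = y0 then 1 else 0)"
    using sum_eq_1_nat[of "{..<q}" a] by auto
  show ?thesis using y0 Ca by (intro exI[of _ y0]) auto
qed

lemma comb:
  fixes c Cq Cp :: "nat \<Rightarrow> nat"
  assumes p: "prime p" and q: "prime q" and pq: "p \<noteq> q"
    and ident: "\<And>b. b < p * q \<Longrightarrow> int (p * q) * int (c b) + int (p + q) = int q * int (Cq (b mod q)) + int p * int (Cp (b mod p))"
    and sq: "(\<Sum>y<q. Cq y) = p + q" and sp: "(\<Sum>x<p. Cp x) = p + q"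
  shows "\<exists>y0<q. \<exists>x0<p. \<forall>b<p * q. c b = (if b mod q = y0 then 1 else 0) + (if b mod p = x0 then 1 else 0)"
proof -
  have p2: "p \<ge> 2" and q2: "q \<ge> 2" using p q prime_ge_2_nat by auto
  have "\<exists>y0<q. \<forall>y<q. Cq y = (if y = y0 then p + 1 else 1)"
  proof (rule one_class[OF p q pq sq])
    fix y assume y: "y < q"
    hence yb: "y < p * q" using p2 by (metis less_le_trans mult_le_mono1 mult_1 one_le_numeral order_trans)
    have "int q * (int (Cq y) - 1) = int p * (int q * int (c y) + 1 - int (Cp (y mod p)))"
      using ident[OF yb] y by (simp add: algebra_simps)
    thus "int p dvd int q * (int (Cq y) - 1)" by simp
  qed
  then obtain y0 where y0: "y0 < q" "\<forall>y<q. Cq y = (if y = y0 then p + 1 else 1)" by blast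
  have "\<exists>x0<p. \<forall>x<p. Cp x = (if x = x0 then q + 1 else 1)"
  proof (rule one_class[OF q p pq[symmetric]])
    show "(\<Sum>x<p. Cp x) = q + p" using sp by simp
  next
    fix x assume x: "x < p"
    hence xb: "x < p * q" using q2 by (metis less_le_trans mult_le_mono2 mult_1_right one_le_numeral order_trans)
    have "int p * (int (Cp x) - 1) = int q * (int p * int (c x) + 1 - int (Cq (x mod q)))"
      using ident[OF xb] x by (simp add: algebra_simps)
    thus "int q dvd int p * (int (Cp x) - 1)" by simp
  qed
  then obtain x0 where x0: "x0 < p" "\<forall>x<p. Cp x = (if x = x0 then q + 1 else 1)" by blast
  have "c b = (if b mod q = y0 then 1 else 0) + (if b mod p = x0 then 1 else 0)" if b: "b < p * q" for b
  proof -
    have bq: "b mod q < q" and bp: "b mod p < p" using p2 q2 by auto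
    have "int (p * q) * int (c b) = int (p * q) * int ((if b mod q = y0 then 1 else 0) + (if b mod p = x0 then 1 else 0))"
      using ident[OF b] y0(2)[rule_format, OF bq] x0(2)[rule_format, OF bp]
      by (auto simp: algebra_simps)
    thus ?thesis using p2 q2 by (subst (asm) mult_left_cancel) auto
  qed
  thus ?thesis using x0(1) y0(1) by blast
qed



lemma sum_card_fibres:
  fixes g :: "nat \<Rightarrow> nat"
  assumes "\<And>k. k < N \<Longrightarrow> g k < M"
  shows "(\<Sum>y<M. card {k. k < N \<and> g k = y}) = N"
proof -
  have "(\<Sum>y\<in>{..<M}. sum (\<lambda>_. 1::nat) {x \<in> {..<N}. g x = y}) = sum (\<lambda>_. 1) {..<N}"
    by (rule sum.group) (use assms in auto)
  moreover have "{x \<in> {..<N}. g x = y} = {k. k < N \<and> g k = y}" for y by auto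
  ultimately show ?thesis by simp
qed

lemma card_residue:
  fixes p q y :: nat
  assumes "y < q"
  shows "card {b. b < p * q \<and> b mod q = y} = p"
proof -
  have "{b. b < p * q \<and> b mod q = y} = (\<lambda>t. y + q * t) ` {..<p}"
  proof (rule subset_antisym; rule subsetI)
    fix b assume b: "b \<in> {b. b < p * q \<and> b mod q = y}"
    hence "b = y + q * (b div q)" using mod_mult_div_eq[of b q] by simp
    moreover have "b div q < p" by (rule less_mult_imp_div_less) (use b in simp)
    ultimately show "b \<in> (\<lambda>t. y + q * t) ` {..<p}" by blast
  next
    fix b assume "b \<in> (\<lambda>t. y + q * t) ` {..<p}"
    then obtain t where t: "t < p" "b = y + q * t" by auto
    have "y + q * t < q + q * t" using assms by simp
    also have "\<dots> = q * (t + 1)" by simp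
    also have "\<dots> \<le> q * p" using t(1) by (intro mult_le_mono2) simp
    finally show "b \<in> {b. b < p * q \<and> b mod q = y}" using t assms by (simp add: mult.commute)
  qed
  moreover have "inj_on (\<lambda>t. y + q * t) {..<p}" using assms by (auto simp: inj_on_def)
  ultimately show ?thesis by (simp add: card_image)
qed

lemma coset_char:
  assumes n: "n > 0" and dn: "d dvd n"
  shows "coset_mult n d r = {a. 0 \<le> a \<and> a < int n \<and> a mod int d = r mod int d}"
proof (rule subset_antisym; rule subsetI)
  fix a assume "a \<in> coset_mult n d r"
  then obtain t where t: "a = (r + int d * t) mod int n" unfolding coset_mult_def by auto
  have "int d dvd int n" using dn by simp
  hence "a mod int d = (r + int d * t) mod int d" unfolding t by (rule mod_mod_cancel)
  also have "\<dots> = r mod int d" by simp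
  finally show "a \<in> {a. 0 \<le> a \<and> a < int n \<and> a mod int d = r mod int d}" using n t by simp
next
  fix a assume a: "a \<in> {a. 0 \<le> a \<and> a < int n \<and> a mod int d = r mod int d}"
  hence "int d dvd a - r" by (simp add: mod_eq_dvd_iff)
  then obtain t where "a - r = int d * t" by blast
  hence "a = (r + int d * t) mod int n" using a by simp
  thus "a \<in> coset_mult n d r" unfolding coset_mult_def by blast
qed



lemma exp_prod_eq:
  assumes n: "n > 0"
  shows "exp (2 * of_real pi * \<i> * of_int a / of_nat n) * cnj (exp (2 * of_real pi * \<i> * of_int b / of_nat n)) =
    cnj (exp (2 * of_real pi * \<i> / of_nat n)) ^ nat ((b - a) mod int n)"
proof -
  define L where "L = (b - a) mod int n"
  define t where "t = (b - a) div int n"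
  have L0: "L \<ge> 0" using n by (simp add: L_def)
  have ba: "b - a = int n * t + L" by (simp add: L_def t_def)
  have nc: "(of_nat n :: complex) \<noteq> 0" using n by simp
  have "cnj (exp (2 * of_real pi * \<i> / of_nat n)) ^ nat L = cnj (exp (2 * of_real pi * \<i> / of_nat n) ^ nat L)"
    by simp
  also have "exp (2 * of_real pi * \<i> / of_nat n) ^ nat L = exp (of_nat (nat L) * (2 * of_real pi * \<i> / of_nat n))"
    by (rule exp_of_nat_mult[symmetric])
  also have "cnj \<dots> = exp (- (2 * of_real pi * \<i> * of_int L / of_nat n))"
    using L0 by (simp add: exp_cnj mult_ac)
  finally have R: "cnj (exp (2 * of_real pi * \<i> / of_nat n)) ^ nat L = exp (- (2 * of_real pi * \<i> * of_int L / of_nat n))" .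
  have "exp (2 * of_real pi * \<i> * of_int a / of_nat n) * cnj (exp (2 * of_real pi * \<i> * of_int b / of_nat n))
      = exp (2 * of_real pi * \<i> * of_int a / of_nat n + (- (2 * of_real pi * \<i> * of_int b / of_nat n)))"
    by (simp add: exp_cnj exp_add[symmetric] del: exp_add)
  also have "\<dots> = exp (- (2 * of_real pi * \<i> * of_int L / of_nat n))"
  proof (subst exp_eq, rule exI[of _ "- t"])
    have "of_int b = (of_int a + of_nat n * of_int t + of_int L :: complex)"
      using arg_cong[OF ba, of "of_int :: int \<Rightarrow> complex"] by (simp add: algebra_simps)
    thus "2 * of_real pi * \<i> * of_int a / of_nat n + - (2 * of_real pi * \<i> * of_int b / of_nat n) =
      - (2 * of_real pi * \<i> * of_int L / of_nat n) + complex_of_real (real_of_int (2 * - t) * pi) * \<i>"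
      using nc by (simp add: field_simps)
  qed
  finally show ?thesis using R by (simp add: L_def)
qed



theorem lemma6p1:
  fixes p q :: nat and m :: "nat \<Rightarrow> nat \<Rightarrow> int"
  assumes "prime p" and "prime q" and "p \<noteq> q"
    and "zmod_matrix (p + q) (p * q) m"
    and "complex_hadamard (p + q) (exp_matrix (p * q) m)"
  shows "\<forall>i<p + q. \<forall>j<p + q. i \<noteq> j \<longrightarrow>
    (\<exists>P Q R r. P \<union> Q \<union> R = {..<p + q} \<and> P \<inter> Q = {} \<and> P \<inter> R = {} \<and> Q \<inter> R = {} \<and>
       r \<in> {0..<int (p * q)} \<and>
       card R = 2 \<and> (\<forall>k\<in>R. Ldiff (p * q) m i j k = r) \<and>
       card P = p - 1 \<and> Ldiff (p * q) m i j ` P = coset_mult (p * q) q r - {r} \<and>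
       card Q = q - 1 \<and> Ldiff (p * q) m i j ` Q = coset_mult (p * q) p r - {r})"
proof (intro allI impI)
  fix i j assume i: "i < p + q" and j: "j < p + q" and ij: "i \<noteq> j"
  note p = assms(1) and q = assms(2) and pq = assms(3)
  define n where "n = p * q"
  define N where "N = p + q"
  have p2: "p \<ge> 2" and q2: "q \<ge> 2" using p q prime_ge_2_nat by auto
  have npos: "n > 0" using p2 q2 by (simp add: n_def)
  define Lz where "Lz k = Ldiff n m i j k" for k
  define L where "L k = nat (Lz k)" for k
  have Lz0: "0 \<le> Lz k" and Lzn: "Lz k < int n" for k
    using npos by (simp_all add: Lz_def Ldiff_def)
  have LzL: "Lz k = int (L k)" for k using Lz0[of k] by (simp add: L_def)
  have Lb: "L k < n" for k using Lzn[of k] LzL[of k] by simp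
  define w where "w = cnj (exp (2 * of_real pi * \<i> / of_nat n))"
  have wprim: "w ^ k = 1 \<longleftrightarrow> p * q dvd k" for k
  proof -
    have "w ^ k = cnj (exp (2 * of_real pi * \<i> / of_nat n) ^ k)" by (simp add: w_def)
    also have "exp (2 * of_real pi * \<i> / of_nat n) ^ k = exp (2 * of_real pi * \<i> * of_nat k / of_nat n)"
      by (subst exp_of_nat_mult[symmetric]) (simp add: mult_ac)
    finally have "w ^ k = 1 \<longleftrightarrow> exp (2 * of_real pi * \<i> * of_nat k / of_nat n) = 1"
      by (metis complex_cnj_one complex_cnj_cnj)
    also have "\<dots> \<longleftrightarrow> n dvd k" using npos by (intro complex_root_unity_eq_1) simp
    finally show ?thesis by (simp add: n_def)
  qed
  have van: "(\<Sum>k<N. w ^ L k) = 0"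
  proof -
    have "(\<Sum>k<N. exp_matrix n m i k * cnj (exp_matrix n m j k)) = 0"
      using assms(5) i j ij unfolding complex_hadamard_def n_def N_def by blast
    moreover have "exp_matrix n m i k * cnj (exp_matrix n m j k) = w ^ L k" for k
      unfolding exp_matrix_def w_def L_def Lz_def Ldiff_def by (rule exp_prod_eq[OF npos])
    ultimately show ?thesis by simp
  qed
  define c where "c b = card {k. k < N \<and> L k = b}" for b
  define Cq where "Cq y = card {k. k < N \<and> L k mod q = y}" for y
  define Cp where "Cp x = card {k. k < N \<and> L k mod p = x}" for x
  have ident: "int (p * q) * int (c b) + int (p + q) = int q * int (Cq (b mod q)) + int p * int (Cp (b mod p))"
    if "b < p * q" for b
    using count_identity[OF p q pq wprim, of N L b] Lb van that
    unfolding c_def Cq_def Cp_def N_def n_def by simp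
  have sq: "(\<Sum>y<q. Cq y) = p + q" unfolding Cq_def
    using sum_card_fibres[of N "\<lambda>k. L k mod q" q] q2 by (simp add: N_def)
  have sp: "(\<Sum>x<p. Cp x) = p + q" unfolding Cp_def
    using sum_card_fibres[of N "\<lambda>k. L k mod p" p] p2 by (simp add: N_def)
  obtain y0 x0 where y0: "y0 < q" and x0: "x0 < p"
    and cf: "\<And>b. b < p * q \<Longrightarrow> c b = (if b mod q = y0 then 1 else 0) + (if b mod p = x0 then 1 else 0)"
    using comb[OF p q pq ident sq sp] by blast
  have cpq: "coprime q p" using p q pq by (simp add: primes_coprime)
  obtain r0 where r0: "[r0 = y0] (mod q)" "[r0 = x0] (mod p)"
    using binary_chinese_remainder_nat[OF cpq] by blast
  define r where "r = r0 mod n"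
  have rn: "r < n" using npos by (simp add: r_def)
  have rq: "r mod q = y0" using r0(1) y0 by (simp add: r_def n_def cong_def mod_mod_cancel)
  have rp: "r mod p = x0" using r0(2) x0 by (simp add: r_def n_def cong_def mod_mod_cancel)
  have uniq: "b = r" if "b < n" "b mod q = y0" "b mod p = x0" for b
  proof -
    have "[b = r] (mod q * p)"
      by (rule coprime_cong_mult_nat) (use that rq rp cpq in \<open>auto simp: cong_def\<close>)
    thus ?thesis using that(1) rn by (intro cong_less_modulus_unique_nat) (auto simp: n_def mult.commute)
  qed
  define R where "R = {k. k < N \<and> L k = r}"
  define P where "P = {k. k < N \<and> L k \<noteq> r \<and> L k mod q = y0}"
  define Q where "Q = {k. k < N \<and> L k \<noteq> r \<and> L k mod p = x0}"
  have cL: "c (L k) \<ge> 1" if "k < N" for k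
  proof -
    have "k \<in> {k'. k' < N \<and> L k' = L k}" using that by simp
    hence "{k'. k' < N \<and> L k' = L k} \<noteq> {}" by blast
    moreover have "finite {k'. k' < N \<and> L k' = L k}" by simp
    ultimately show ?thesis unfolding c_def by (simp add: Suc_le_eq card_gt_0_iff)
  qed
  have union: "P \<union> Q \<union> R = {..<N}"
  proof (rule subset_antisym; rule subsetI)
    fix k assume "k \<in> P \<union> Q \<union> R" thus "k \<in> {..<N}" by (auto simp: P_def Q_def R_def)
  next
    fix k assume "k \<in> {..<N}"
    hence k: "k < N" by simp
    have "c (L k) = (if L k mod q = y0 then 1 else 0) + (if L k mod p = x0 then 1 else 0)"
      using cf Lb[of k] by (simp add: n_def)
    hence "L k mod q = y0 \<or> L k mod p = x0" using cL[OF k] by (auto split: if_splits)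
    thus "k \<in> P \<union> Q \<union> R" using k by (auto simp: P_def Q_def R_def)
  qed
  have PQ: "P \<inter> Q = {}" using uniq Lb by (auto simp: P_def Q_def)
  have PR: "P \<inter> R = {}" and QR: "Q \<inter> R = {}" by (auto simp: P_def Q_def R_def)
  have cardR: "card R = 2" using cf[of r] rn rq rp by (simp add: R_def c_def n_def)
  have hL: "Ldiff (p * q) m i j = (\<lambda>k. int (L k))"
  proof
    fix k show "Ldiff (p * q) m i j k = int (L k)" using LzL[of k] by (simp add: Lz_def n_def)
  qed
  have RL: "\<forall>k\<in>R. Ldiff (p * q) m i j k = int r"
    unfolding hL by (simp add: R_def)
  have fib1: "\<exists>k0. {k. k < N \<and> L k = b} = {k0}" if "b < n" "c b = 1" for b
    using that(2) unfolding c_def by (rule card_1_singletonE) blast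
  define Sq where "Sq = {b. b < n \<and> b mod q = y0 \<and> b \<noteq> r}"
  define Sp where "Sp = {b. b < n \<and> b mod p = x0 \<and> b \<noteq> r}"
  have cSq: "c b = 1" if "b \<in> Sq" for b
  proof -
    have "b mod p \<noteq> x0" using uniq[of b] that by (auto simp: Sq_def)
    thus ?thesis using cf[of b] that by (simp add: Sq_def n_def)
  qed
  have cSp: "c b = 1" if "b \<in> Sp" for b
  proof -
    have "b mod q \<noteq> y0" using uniq[of b] that by (auto simp: Sp_def)
    thus ?thesis using cf[of b] that by (simp add: Sp_def n_def)
  qed
  have imP: "L ` P = Sq"
  proof (rule subset_antisym; rule subsetI)
    fix b assume "b \<in> L ` P" thus "b \<in> Sq" using Lb by (auto simp: P_def Sq_def)
  next
    fix b assume b: "b \<in> Sq"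
    have "b < n" using b by (simp add: Sq_def)
    then obtain k0 where "{k. k < N \<and> L k = b} = {k0}" using fib1[OF _ cSq[OF b]] by blast
    hence "k0 < N" "L k0 = b" by auto
    thus "b \<in> L ` P" using b by (auto simp: P_def Sq_def)
  qed
  have imQ: "L ` Q = Sp"
  proof (rule subset_antisym; rule subsetI)
    fix b assume "b \<in> L ` Q" thus "b \<in> Sp" using Lb by (auto simp: Q_def Sp_def)
  next
    fix b assume b: "b \<in> Sp"
    have "b < n" using b by (simp add: Sp_def)
    then obtain k0 where "{k. k < N \<and> L k = b} = {k0}" using fib1[OF _ cSp[OF b]] by blast
    hence "k0 < N" "L k0 = b" by auto
    thus "b \<in> L ` Q" using b by (auto simp: Q_def Sp_def)
  qed
  have injP: "inj_on L P"
  proof (rule inj_onI)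
    fix k1 k2 assume k1: "k1 \<in> P" and k2: "k2 \<in> P" and e: "L k1 = L k2"
    have hS: "L k1 \<in> Sq" using imP k1 by blast
    hence "L k1 < n" by (simp add: Sq_def)
    then obtain k0 where "{k. k < N \<and> L k = L k1} = {k0}" using fib1[OF _ cSq[OF hS]] by blast
    note E = this
    have m1: "k1 \<in> {k. k < N \<and> L k = L k1}" and m2: "k2 \<in> {k. k < N \<and> L k = L k1}"
      using k1 k2 e by (auto simp: P_def)
    have "k1 \<in> {k0}" using m1 unfolding E .
    moreover have "k2 \<in> {k0}" using m2 unfolding E .
    ultimately show "k1 = k2" by simp
  qed
  have injQ: "inj_on L Q"
  proof (rule inj_onI)
    fix k1 k2 assume k1: "k1 \<in> Q" and k2: "k2 \<in> Q" and e: "L k1 = L k2"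
    have hS: "L k1 \<in> Sp" using imQ k1 by blast
    hence "L k1 < n" by (simp add: Sp_def)
    then obtain k0 where "{k. k < N \<and> L k = L k1} = {k0}" using fib1[OF _ cSp[OF hS]] by blast
    note E = this
    have m1: "k1 \<in> {k. k < N \<and> L k = L k1}" and m2: "k2 \<in> {k. k < N \<and> L k = L k1}"
      using k1 k2 e by (auto simp: Q_def)
    have "k1 \<in> {k0}" using m1 unfolding E .
    moreover have "k2 \<in> {k0}" using m2 unfolding E .
    ultimately show "k1 = k2" by simp
  qed
  have cardSq: "card Sq = p - 1"
  proof -
    have "Sq = {b. b < p * q \<and> b mod q = y0} - {r}" by (auto simp: Sq_def n_def)
    moreover have "r \<in> {b. b < p * q \<and> b mod q = y0}" using rn rq by (simp add: n_def)
    ultimately show ?thesis using card_residue[OF y0, of p] by simp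
  qed
  have cardSp: "card Sp = q - 1"
  proof -
    have "Sp = {b. b < q * p \<and> b mod p = x0} - {r}" by (auto simp: Sp_def n_def mult.commute)
    moreover have "r \<in> {b. b < q * p \<and> b mod p = x0}" using rn rp by (simp add: n_def mult.commute)
    ultimately show ?thesis using card_residue[OF x0, of q] by simp
  qed
  have cardP: "card P = p - 1" using card_image[OF injP] imP cardSq by simp
  have cardQ: "card Q = q - 1" using card_image[OF injQ] imQ cardSp by simp
  have LdP: "Ldiff (p * q) m i j ` P = int ` Sq"
    unfolding hL imP[symmetric] by (simp add: image_image)
  have LdQ: "Ldiff (p * q) m i j ` Q = int ` Sp"
    unfolding hL imQ[symmetric] by (simp add: image_image)
  have cosq: "coset_mult (p * q) q (int r) - {int r} = int ` Sq"
  proof -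
    have "coset_mult (p * q) q (int r) = {a. 0 \<le> a \<and> a < int n \<and> a mod int q = int r mod int q}"
      using coset_char[of n q "int r"] npos by (simp add: n_def)
    moreover have "int ` Sq = {a. 0 \<le> a \<and> a < int n \<and> a mod int q = int r mod int q} - {int r}"
    proof (rule subset_antisym; rule subsetI)
      fix a assume "a \<in> int ` Sq"
      thus "a \<in> {a. 0 \<le> a \<and> a < int n \<and> a mod int q = int r mod int q} - {int r}"
        using rq by (auto simp: Sq_def simp flip: of_nat_mod)
    next
      fix a assume a: "a \<in> {a. 0 \<le> a \<and> a < int n \<and> a mod int q = int r mod int q} - {int r}"
      hence "a = int (nat a)" by simp
      moreover have "nat a \<in> Sq" using a rq by (auto simp: Sq_def nat_less_iff simp flip: of_nat_mod) (metis nat_int nat_mod_distrib of_nat_0_le_iff)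
      ultimately show "a \<in> int ` Sq" by blast
    qed
    ultimately show ?thesis by simp
  qed
  have cosp: "coset_mult (p * q) p (int r) - {int r} = int ` Sp"
  proof -
    have "coset_mult (p * q) p (int r) = {a. 0 \<le> a \<and> a < int n \<and> a mod int p = int r mod int p}"
      using coset_char[of n p "int r"] npos by (simp add: n_def)
    moreover have "int ` Sp = {a. 0 \<le> a \<and> a < int n \<and> a mod int p = int r mod int p} - {int r}"
    proof (rule subset_antisym; rule subsetI)
      fix a assume "a \<in> int ` Sp"
      thus "a \<in> {a. 0 \<le> a \<and> a < int n \<and> a mod int p = int r mod int p} - {int r}"
        using rp by (auto simp: Sp_def simp flip: of_nat_mod)
    next
      fix a assume a: "a \<in> {a. 0 \<le> a \<and> a < int n \<and> a mod int p = int r mod int p} - {int r}"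
      hence "a = int (nat a)" by simp
      moreover have "nat a \<in> Sp" using a rp by (auto simp: Sp_def nat_less_iff simp flip: of_nat_mod) (metis nat_int nat_mod_distrib of_nat_0_le_iff)
      ultimately show "a \<in> int ` Sp" by blast
    qed
    ultimately show ?thesis by simp
  qed
  have rnn: "int r < int p * int q" using rn unfolding n_def by (metis of_nat_less_iff of_nat_mult)
  show "\<exists>P Q R r. P \<union> Q \<union> R = {..<p + q} \<and> P \<inter> Q = {} \<and> P \<inter> R = {} \<and> Q \<inter> R = {} \<and>
       r \<in> {0..<int (p * q)} \<and>
       card R = 2 \<and> (\<forall>k\<in>R. Ldiff (p * q) m i j k = r) \<and>
       card P = p - 1 \<and> Ldiff (p * q) m i j ` P = coset_mult (p * q) q r - {r} \<and>
       card Q = q - 1 \<and> Ldiff (p * q) m i j ` Q = coset_mult (p * q) p r - {r}"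
    apply (rule exI[of _ P], rule exI[of _ Q], rule exI[of _ R], rule exI[of _ "int r"])
    using union PQ PR QR rnn cardR RL cardP cardQ LdP LdQ cosq cosp by (simp add: N_def n_def)
qed


end
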